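(* Consider a sequence of samples indexed by $N$ of units $i=1,\dots,N$ observed at times $t=-L,\dots,0,1$ with binary treatment $A_i$ applied at $t=1$, where potential outcomes satisfy $Y_{it}(0)-Y_{i,t-1}(0)=\delta_t+\epsilon_{it,0}$ and $Y_{it}(1)-Y_{it}(0)=\mathbb{I}(t=1)(\psi+\epsilon_{it,1})$, with $\psi_i=\psi+\epsilon_{i1,1}$. Assume $Y_{it}=\mathbb{I}(t=1)A_iY_{it}(1)+(1-\mathbb{I}(t=1)A_i)Y_{it}(0)$; $N^{-1}\sum_{i=1}^N\epsilon_{it,a}\to 0$ almost surely for $a=0,1$; $N^{-1}\sum_iA_i\to p\in(0,1)$ almost surely; $1\le\sum_iA_i\le N-1$; and $|\epsilon_{it,a}|\le\zeta$ for all $i,t,a$. Let $\hat\psi_i^{DiD}$ be the unit-level difference-in-differences estimator ($Y_{i1}-Y_{i0}-[\sum_j(1-A_j)]^{-1}\sum_j(1-A_j)(Y_{j1}-Y_{j0})$ for treated $i$, and $Y_{i0}+[\sum_jA_j]^{-1}\sum_jA_j(Y_{j1}-Y_{j0})-Y_{i1}$ for untreated $i$), and $\tilde\tau_i=\{\tau\ge 0:\psi_i\in[\hat\psi_i^{DiD}-\tau,\hat\psi_i^{DiD}+\tau]\}$. (i) If in addition $[\sum_iA_i]^{-1}\sum_iA_i\epsilon_{i1,0}\to 0$ almost surely as $N\to\infty$, then there is a sequence $r_N\to 0$ almost surely such that for every treated unit $i$, every $q_0\ge\zeta+r_N$ lies in $\tilde\tau_i$. (ii) If in addition both $[\sum_iA_i]^{-1}\sum_iA_i\epsilon_{i1,0}\to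 0$ and $[\sum_iA_i]^{-1}\sum_iA_i\epsilon_{i1,1}\to 0$ almost surely, then there is a sequence $r_N\to 0$ almost surely such that for every untreated unit $i$, every $q_1\ge 2\zeta+r_N$ lies in $\tilde\tau_i$. *)

theory Defs
  imports "HOL-Probability.Probability"
begin

definition did_est :: "nat \<Rightarrow> (nat \<Rightarrow> bool) \<Rightarrow> (nat \<Rightarrow> int \<Rightarrow> real) \<Rightarrow> nat \<Rightarrow> real" where
  "did_est N A Y i =
     (if A i then
        Y i 1 - Y i 0
        - (\<Sum>j\<in>{1..N}. of_bool (\<not> A j) * (Y j 1 - Y j 0)) / (\<Sum>j\<in>{1..N}. of_bool (\<not> A j))
      else
        Y i 0 + (\<Sum>j\<in>{1..N}. of_bool (A j) * (Y j 1 - Y j 0)) / (\<Sum>j\<in>{1..N}. of_bool (A j))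
        - Y i 1)"

definition tau_tilde :: "real \<Rightarrow> real \<Rightarrow> real set" where
  "tau_tilde psi_i est = {\<tau>. \<tau> \<ge> 0 \<and> psi_i \<in> {est - \<tau> .. est + \<tau>}}"

end

theory Submission
  imports Defs
begin

lemma divlem: "(n::real) \<ge> 1 \<Longrightarrow> x = d * n + s \<Longrightarrow> x / n = d + s / n"
  by (simp add: field_simps)

theorem corollary1:
  fixes M :: "'w measure"
    and L :: nat
    and \<delta> :: "int \<Rightarrow> real" and \<psi> :: real and p :: real and \<zeta> :: real
    and \<epsilon> :: "nat \<Rightarrow> nat \<Rightarrow> int \<Rightarrow> nat \<Rightarrow> 'w \<Rightarrow> real"
    and A :: "nat \<Rightarrow> nat \<Rightarrow> 'w \<Rightarrow> bool"
    and Y0 Y1 Y :: "nat \<Rightarrow> nat \<Rightarrow> int \<Rightarrow> 'w \<Rightarrow> real"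
  assumes prob: "prob_space M"
    and trend: "\<And>N i t \<omega>. \<omega> \<in> space M \<Longrightarrow> i \<in> {1..N} \<Longrightarrow> t \<in> {- int L + 1 .. 1} \<Longrightarrow>
                  Y0 N i t \<omega> - Y0 N i (t - 1) \<omega> = \<delta> t + \<epsilon> N i t 0 \<omega>"
    and effect: "\<And>N i t \<omega>. \<omega> \<in> space M \<Longrightarrow> i \<in> {1..N} \<Longrightarrow> t \<in> {- int L .. 1} \<Longrightarrow>
                  Y1 N i t \<omega> - Y0 N i t \<omega> = of_bool (t = 1) * (\<psi> + \<epsilon> N i 1 1 \<omega>)"
    and observed: "\<And>N i t \<omega>. \<omega> \<in> space M \<Longrightarrow> i \<in> {1..N} \<Longrightarrow> t \<in> {- int L .. 1} \<Longrightarrow>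
                  Y N i t \<omega> = of_bool (t = 1) * of_bool (A N i \<omega>) * Y1 N i t \<omega>
                               + (1 - of_bool (t = 1) * of_bool (A N i \<omega>)) * Y0 N i t \<omega>"
    and eps_lln: "\<And>t a. t \<in> {- int L .. 1} \<Longrightarrow> a \<in> {0, 1} \<Longrightarrow>
                  AE \<omega> in M. (\<lambda>N. (\<Sum>i\<in>{1..N}. \<epsilon> N i t a \<omega>) / real N) \<longlonglongrightarrow> 0"
    and p_range: "0 < p" "p < 1"
    and A_lln: "AE \<omega> in M. (\<lambda>N. (\<Sum>i\<in>{1..N}. of_bool (A N i \<omega>)) / real N) \<longlonglongrightarrow> p"
    and A_bounds: "\<And>N \<omega>. \<omega> \<in> space M \<Longrightarrow> N \<ge> 2 \<Longrightarrow>
                  1 \<le> (\<Sum>i\<in>{1..N}. of_bool (A N i \<omega>) :: real)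
                  \<and> (\<Sum>i\<in>{1..N}. of_bool (A N i \<omega>) :: real) \<le> real N - 1"
    and eps_bound: "\<And>N i t a \<omega>. \<omega> \<in> space M \<Longrightarrow> i \<in> {1..N} \<Longrightarrow> t \<in> {- int L .. 1} \<Longrightarrow>
                  a \<in> {0, 1} \<Longrightarrow> \<bar>\<epsilon> N i t a \<omega>\<bar> \<le> \<zeta>"
  shows
    "((AE \<omega> in M. (\<lambda>N. (\<Sum>i\<in>{1..N}. of_bool (A N i \<omega>) * \<epsilon> N i 1 0 \<omega>)
                         / (\<Sum>i\<in>{1..N}. of_bool (A N i \<omega>))) \<longlonglongrightarrow> 0)
      \<longrightarrow> (\<exists>r :: nat \<Rightarrow> 'w \<Rightarrow> real.
            (AE \<omega> in M. (\<lambda>N. r N \<omega>) \<longlonglongrightarrow> 0)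
            \<and> (\<forall>\<omega>\<in>space M. \<forall>N. \<forall>i\<in>{1..N}. A N i \<omega> \<longrightarrow>
                 (\<forall>q0. q0 \<ge> \<zeta> + r N \<omega> \<longrightarrow>
                    q0 \<in> tau_tilde (\<psi> + \<epsilon> N i 1 1 \<omega>)
                                    (did_est N (\<lambda>j. A N j \<omega>) (\<lambda>j t. Y N j t \<omega>) i)))))
     \<and>
     ((AE \<omega> in M. (\<lambda>N. (\<Sum>i\<in>{1..N}. of_bool (A N i \<omega>) * \<epsilon> N i 1 0 \<omega>)
                         / (\<Sum>i\<in>{1..N}. of_bool (A N i \<omega>))) \<longlonglongrightarrow> 0)
      \<and> (AE \<omega> in M. (\<lambda>N. (\<Sum>i\<in>{1..N}. of_bool (A N i \<omega>) * \<epsilon> N i 1 1 \<omega>)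
                         / (\<Sum>i\<in>{1..N}. of_bool (A N i \<omega>))) \<longlonglongrightarrow> 0)
      \<longrightarrow> (\<exists>r :: nat \<Rightarrow> 'w \<Rightarrow> real.
            (AE \<omega> in M. (\<lambda>N. r N \<omega>) \<longlonglongrightarrow> 0)
            \<and> (\<forall>\<omega>\<in>space M. \<forall>N. \<forall>i\<in>{1..N}. \<not> A N i \<omega> \<longrightarrow>
                 (\<forall>q1. q1 \<ge> 2 * \<zeta> + r N \<omega> \<longrightarrow>
                    q1 \<in> tau_tilde (\<psi> + \<epsilon> N i 1 1 \<omega>)
                                    (did_est N (\<lambda>j. A N j \<omega>) (\<lambda>j t. Y N j t \<omega>) i)))))"
proof -
  let ?nA = "\<lambda>N \<omega>. (\<Sum>j\<in>{1..N}. of_bool (A N j \<omega>) :: real)"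
  let ?nU = "\<lambda>N \<omega>. (\<Sum>j\<in>{1..N}. of_bool (\<not> A N j \<omega>) :: real)"
  let ?est = "\<lambda>N \<omega> i. did_est N (\<lambda>j. A N j \<omega>) (\<lambda>j t. Y N j t \<omega>) i"
  let ?err = "\<lambda>N \<omega> i. \<psi> + \<epsilon> N i 1 1 \<omega> - ?est N \<omega> i"
  have D: "Y N i 1 \<omega> - Y N i 0 \<omega> = \<delta> 1 + \<epsilon> N i 1 0 \<omega> + of_bool (A N i \<omega>) * (\<psi> + \<epsilon> N i 1 1 \<omega>)"
    if "\<omega> \<in> space M" "i \<in> {1..N}" for N i :: nat and \<omega>
    using observed[OF that, of 1] observed[OF that, of 0] effect[OF that, of 1] trend[OF that, of 1]
    by (cases "A N i \<omega>") auto
  have zeta: "0 \<le> \<zeta>" if "\<omega> \<in> space M" "i \<in> {1..N}" for N i :: nat and \<omega>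
    using eps_bound[OF that, of 1 0] by auto
  have nsum: "?nU N \<omega> = real N - ?nA N \<omega>" for N :: nat and \<omega>
  proof -
    have "?nU N \<omega> + ?nA N \<omega> = (\<Sum>j\<in>{1..N}. 1)"
      by (subst sum.distrib[symmetric]) (rule sum.cong, auto)
    then show ?thesis by simp
  qed
  have sU: "(\<Sum>j\<in>{1..N}. of_bool (\<not> A N j \<omega>) * f j) = (\<Sum>j\<in>{1..N}. f j) - (\<Sum>j\<in>{1..N}. of_bool (A N j \<omega>) * f j)"
    for N :: nat and \<omega> and f :: "nat \<Rightarrow> real"
  proof -
    have "(\<Sum>j\<in>{1..N}. of_bool (\<not> A N j \<omega>) * f j) + (\<Sum>j\<in>{1..N}. of_bool (A N j \<omega>) * f j) = (\<Sum>j\<in>{1..N}. f j)"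
      by (subst sum.distrib[symmetric]) (rule sum.cong, auto)
    then show ?thesis by simp
  qed
  have in_tau: "q \<in> tau_tilde x e" if "\<bar>x - e\<bar> \<le> q" for q x e
    using that unfolding tau_tilde_def by auto
  have small: "\<bar>?err N \<omega> i\<bar> \<le> (\<Sum>k\<in>{1..N}. \<bar>?err N \<omega> k\<bar>)" if "i \<in> {1..N}" for N i :: nat and \<omega>
    by (rule member_le_sum[OF that]) auto

  have e10: "AE \<omega> in M. (\<lambda>N. (\<Sum>i\<in>{1..N}. \<epsilon> N i 1 0 \<omega>) / real N) \<longlonglongrightarrow> 0"
    using eps_lln[of 1 0] by simp
  define rU where "rU N \<omega> = (\<Sum>j\<in>{1..N}. of_bool (\<not> A N j \<omega>) * \<epsilon> N j 1 0 \<omega>) / ?nU N \<omega>" for N :: nat and \<omega>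
  define r1 where "r1 N \<omega> = (if N < 2 then (\<Sum>k\<in>{1..N}. \<bar>?err N \<omega> k\<bar>) else \<bar>rU N \<omega>\<bar>)" for N :: nat and \<omega>
  have errT: "?err N \<omega> i = - \<epsilon> N i 1 0 \<omega> + rU N \<omega>"
    if "\<omega> \<in> space M" "i \<in> {1..N}" "A N i \<omega>" "N \<ge> 2" for N i :: nat and \<omega>
  proof -
    have nU1: "?nU N \<omega> \<ge> 1" using A_bounds[OF that(1) that(4)] nsum[of N \<omega>] by linarith
    have "(\<Sum>j\<in>{1..N}. of_bool (\<not> A N j \<omega>) * (Y N j 1 \<omega> - Y N j 0 \<omega>))
        = (\<Sum>j\<in>{1..N}. \<delta> 1 * of_bool (\<not> A N j \<omega>) + of_bool (\<not> A N j \<omega>) * \<epsilon> N j 1 0 \<omega>)"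
      by (rule sum.cong) (auto simp: D[OF that(1)])
    also have "\<dots> = \<delta> 1 * ?nU N \<omega> + (\<Sum>j\<in>{1..N}. of_bool (\<not> A N j \<omega>) * \<epsilon> N j 1 0 \<omega>)"
      by (simp add: sum.distrib sum_distrib_left)
    finally have S: "(\<Sum>j\<in>{1..N}. of_bool (\<not> A N j \<omega>) * (Y N j 1 \<omega> - Y N j 0 \<omega>)) / ?nU N \<omega> = \<delta> 1 + rU N \<omega>"
      unfolding rU_def by (rule divlem[OF nU1])
    show ?thesis
      using that(3) S D[OF that(1) that(2)] by (simp add: did_est_def)
  qed
  have bound1: "\<bar>?err N \<omega> i\<bar> \<le> \<zeta> + r1 N \<omega>"
    if "\<omega> \<in> space M" "i \<in> {1..N}" "A N i \<omega>" for N i :: nat and \<omega>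
  proof (cases "N < 2")
    case True
    then show ?thesis using small[OF that(2), of \<omega>] zeta[OF that(1,2)] by (simp add: r1_def)
  next
    case False
    then show ?thesis using errT[OF that, of] eps_bound[OF that(1,2), of 1 0]
      by (simp add: r1_def)
  qed
  have lim1: "(\<lambda>N. r1 N \<omega>) \<longlonglongrightarrow> 0"
    if sp: "\<omega> \<in> space M" and l1: "(\<lambda>N. ?nA N \<omega> / real N) \<longlonglongrightarrow> p"
      and l2: "(\<lambda>N. (\<Sum>i\<in>{1..N}. \<epsilon> N i 1 0 \<omega>) / real N) \<longlonglongrightarrow> 0"
      and l3: "(\<lambda>N. (\<Sum>i\<in>{1..N}. of_bool (A N i \<omega>) * \<epsilon> N i 1 0 \<omega>) / ?nA N \<omega>) \<longlonglongrightarrow> 0"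
    for \<omega>
  proof -
    let ?g = "\<lambda>N. \<bar>((\<Sum>i\<in>{1..N}. \<epsilon> N i 1 0 \<omega>) / real N
        - ((\<Sum>i\<in>{1..N}. of_bool (A N i \<omega>) * \<epsilon> N i 1 0 \<omega>) / ?nA N \<omega>) * (?nA N \<omega> / real N))
        / (1 - ?nA N \<omega> / real N)\<bar>"
    have "?g \<longlonglongrightarrow> \<bar>(0 - 0 * p) / (1 - p)\<bar>"
      using p_range by (intro tendsto_intros l1 l2 l3) auto
    then have g: "?g \<longlonglongrightarrow> 0" by simp
    have ev: "\<forall>\<^sub>F N in sequentially. ?g N = r1 N \<omega>"
    proof (rule eventually_sequentiallyI[of 2])
      fix N :: nat assume N: "N \<ge> 2"
      have b: "1 \<le> ?nA N \<omega>" "?nA N \<omega> \<le> real N - 1" using A_bounds[OF sp N] by auto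
      have "rU N \<omega> = ((\<Sum>i\<in>{1..N}. \<epsilon> N i 1 0 \<omega>) - (\<Sum>i\<in>{1..N}. of_bool (A N i \<omega>) * \<epsilon> N i 1 0 \<omega>)) / (real N - ?nA N \<omega>)"
        unfolding rU_def sU nsum ..
      also have "\<dots> = ((\<Sum>i\<in>{1..N}. \<epsilon> N i 1 0 \<omega>) / real N
        - ((\<Sum>i\<in>{1..N}. of_bool (A N i \<omega>) * \<epsilon> N i 1 0 \<omega>) / ?nA N \<omega>) * (?nA N \<omega> / real N))
        / (1 - ?nA N \<omega> / real N)"
        using b N by (simp add: field_simps)
      finally show "?g N = r1 N \<omega>" using N by (simp add: r1_def)
    qed
    show ?thesis using Lim_transform_eventually[OF g ev] .
  qed
  have part1: "\<exists>r :: nat \<Rightarrow> 'w \<Rightarrow> real.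
            (AE \<omega> in M. (\<lambda>N. r N \<omega>) \<longlonglongrightarrow> 0)
            \<and> (\<forall>\<omega>\<in>space M. \<forall>N. \<forall>i\<in>{1..N}. A N i \<omega> \<longrightarrow>
                 (\<forall>q0. q0 \<ge> \<zeta> + r N \<omega> \<longrightarrow>
                    q0 \<in> tau_tilde (\<psi> + \<epsilon> N i 1 1 \<omega>) (?est N \<omega> i)))"
    if h: "AE \<omega> in M. (\<lambda>N. (\<Sum>i\<in>{1..N}. of_bool (A N i \<omega>) * \<epsilon> N i 1 0 \<omega>) / ?nA N \<omega>) \<longlonglongrightarrow> 0"
  proof (intro exI[of _ r1] conjI ballI allI impI)
    show "AE \<omega> in M. (\<lambda>N. r1 N \<omega>) \<longlonglongrightarrow> 0"
      using AE_space A_lln e10 h by eventually_elim (rule lim1, auto)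
  next
    fix \<omega> N i q0 assume "\<omega> \<in> space M" "i \<in> {1..N}" "A N i \<omega>" "\<zeta> + r1 N \<omega> \<le> q0"
    then show "q0 \<in> tau_tilde (\<psi> + \<epsilon> N i 1 1 \<omega>) (?est N \<omega> i)"
      using bound1 by (intro in_tau) fastforce
  qed
  define rA where "rA N \<omega> = (\<Sum>j\<in>{1..N}. of_bool (A N j \<omega>) * (\<epsilon> N j 1 0 \<omega> + \<epsilon> N j 1 1 \<omega>)) / ?nA N \<omega>" for N :: nat and \<omega>
  define r2 where "r2 N \<omega> = (if N < 2 then (\<Sum>k\<in>{1..N}. \<bar>?err N \<omega> k\<bar>) else \<bar>rA N \<omega>\<bar>)" for N :: nat and \<omega>
  have errU: "?err N \<omega> i = \<epsilon> N i 1 1 \<omega> + \<epsilon> N i 1 0 \<omega> - rA N \<omega>"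
    if "\<omega> \<in> space M" "i \<in> {1..N}" "\<not> A N i \<omega>" "N \<ge> 2" for N i :: nat and \<omega>
  proof -
    have nA1: "?nA N \<omega> \<ge> 1" using A_bounds[OF that(1) that(4)] by linarith
    have "(\<Sum>j\<in>{1..N}. of_bool (A N j \<omega>) * (Y N j 1 \<omega> - Y N j 0 \<omega>))
        = (\<Sum>j\<in>{1..N}. (\<delta> 1 + \<psi>) * of_bool (A N j \<omega>) + of_bool (A N j \<omega>) * (\<epsilon> N j 1 0 \<omega> + \<epsilon> N j 1 1 \<omega>))"
      apply (rule sum.cong, simp)
      subgoal for j by (cases "A N j \<omega>") (simp_all add: D[OF that(1)])
      done
    also have "\<dots> = (\<delta> 1 + \<psi>) * ?nA N \<omega> + (\<Sum>j\<in>{1..N}. of_bool (A N j \<omega>) * (\<epsilon> N j 1 0 \<omega> + \<epsilon> N j 1 1 \<omega>))"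
      by (simp only: sum.distrib sum_distrib_left)
    finally have S: "(\<Sum>j\<in>{1..N}. of_bool (A N j \<omega>) * (Y N j 1 \<omega> - Y N j 0 \<omega>)) / ?nA N \<omega> = (\<delta> 1 + \<psi>) + rA N \<omega>"
      unfolding rA_def by (rule divlem[OF nA1])
    show ?thesis
      using that(3) S D[OF that(1) that(2)] by (simp add: did_est_def)
  qed
  have bound2: "\<bar>?err N \<omega> i\<bar> \<le> 2 * \<zeta> + r2 N \<omega>"
    if "\<omega> \<in> space M" "i \<in> {1..N}" "\<not> A N i \<omega>" for N i :: nat and \<omega>
  proof (cases "N < 2")
    case True
    then show ?thesis using small[OF that(2), of \<omega>] zeta[OF that(1,2)] by (simp add: r2_def)
  next
    case False
    then show ?thesis using errU[OF that, of] eps_bound[OF that(1,2), of 1 0] eps_bound[OF that(1,2), of 1 1]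
      by (simp add: r2_def)
  qed
  have lim2: "(\<lambda>N. r2 N \<omega>) \<longlonglongrightarrow> 0"
    if l3: "(\<lambda>N. (\<Sum>i\<in>{1..N}. of_bool (A N i \<omega>) * \<epsilon> N i 1 0 \<omega>) / ?nA N \<omega>) \<longlonglongrightarrow> 0"
      and l4: "(\<lambda>N. (\<Sum>i\<in>{1..N}. of_bool (A N i \<omega>) * \<epsilon> N i 1 1 \<omega>) / ?nA N \<omega>) \<longlonglongrightarrow> 0"
    for \<omega>
  proof -
    let ?g = "\<lambda>N. \<bar>(\<Sum>i\<in>{1..N}. of_bool (A N i \<omega>) * \<epsilon> N i 1 0 \<omega>) / ?nA N \<omega>
        + (\<Sum>i\<in>{1..N}. of_bool (A N i \<omega>) * \<epsilon> N i 1 1 \<omega>) / ?nA N \<omega>\<bar>"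
    have "?g \<longlonglongrightarrow> \<bar>0 + 0\<bar>"
      by (intro tendsto_intros l3 l4)
    then have g: "?g \<longlonglongrightarrow> 0" by simp
    have ev: "\<forall>\<^sub>F N in sequentially. ?g N = r2 N \<omega>"
    proof (rule eventually_sequentiallyI[of 2])
      fix N :: nat assume N: "N \<ge> 2"
      have "rA N \<omega> = (\<Sum>i\<in>{1..N}. of_bool (A N i \<omega>) * \<epsilon> N i 1 0 \<omega>) / ?nA N \<omega>
        + (\<Sum>i\<in>{1..N}. of_bool (A N i \<omega>) * \<epsilon> N i 1 1 \<omega>) / ?nA N \<omega>"
        unfolding rA_def by (simp only: distrib_left sum.distrib add_divide_distrib)
      then show "?g N = r2 N \<omega>" using N by (simp add: r2_def)
    qed
    show ?thesis using Lim_transform_eventually[OF g ev] .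
  qed
  have part2: "\<exists>r :: nat \<Rightarrow> 'w \<Rightarrow> real.
            (AE \<omega> in M. (\<lambda>N. r N \<omega>) \<longlonglongrightarrow> 0)
            \<and> (\<forall>\<omega>\<in>space M. \<forall>N. \<forall>i\<in>{1..N}. \<not> A N i \<omega> \<longrightarrow>
                 (\<forall>q1. q1 \<ge> 2 * \<zeta> + r N \<omega> \<longrightarrow>
                    q1 \<in> tau_tilde (\<psi> + \<epsilon> N i 1 1 \<omega>) (?est N \<omega> i)))"
    if h3: "AE \<omega> in M. (\<lambda>N. (\<Sum>i\<in>{1..N}. of_bool (A N i \<omega>) * \<epsilon> N i 1 0 \<omega>) / ?nA N \<omega>) \<longlonglongrightarrow> 0"
      and h4: "AE \<omega> in M. (\<lambda>N. (\<Sum>i\<in>{1..N}. of_bool (A N i \<omega>) * \<epsilon> N i 1 1 \<omega>) / ?nA N \<omega>) \<longlonglongrightarrow> 0"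
  proof (intro exI[of _ r2] conjI ballI allI impI)
    show "AE \<omega> in M. (\<lambda>N. r2 N \<omega>) \<longlonglongrightarrow> 0"
      using h3 h4 by eventually_elim (rule lim2, auto)
  next
    fix \<omega> N i q1 assume "\<omega> \<in> space M" "i \<in> {1..N}" "\<not> A N i \<omega>" "2 * \<zeta> + r2 N \<omega> \<le> q1"
    then show "q1 \<in> tau_tilde (\<psi> + \<epsilon> N i 1 1 \<omega>) (?est N \<omega> i)"
      using bound2 by (intro in_tau) fastforce
  qed
  show ?thesis using part1 part2 by blast
qed


end
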